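(* Let $\mathbf{S}=(S_n:n\ge1)\sim L(2,2,p)$ with $p=\sqrt2-1$, and let $x$ be a positive integer. Then $$\mathbb{P}(S_n\ge x\text{ for some }n\ge1)=\mathbb{P}(S_n\le -x\text{ for some }n\ge1)=1.$$
   Context: Ladder chain: let $\xi_1,\xi_2,\dots$ be i.i.d. with values in $\{1,-1\}$, $\mathbb{P}(\xi_i=1)=p$, $\mathbb{P}(\xi_i=-1)=1-p$, and let $r,s$ be positive integers. Define $X_k=-1$ if $\xi_k=-1$; $X_k=s$ if $k\ge r$ and $\xi_k=\xi_{k-1}=\dots=\xi_{k-r+1}=1$; and $X_k=1$ otherwise. Let $S_n=X_1+\dots+X_n$. The process $\mathbf{S}=(S_n:n\ge1)$ is called a ladder chain of order $r$, step $s$ and probability $p$, written $\mathbf{S}\sim L(r,s,p)$. Thus for $L(2,2,p)$: $X_k=-1$ if $\xi_k=-1$, $X_k=2$ if $\xi_k=\xi_{k-1}=1$ ($k\ge2$), and $X_k=1$ otherwise. *)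

theory Defs
  imports "HOL-Probability.Probability"
begin

text \<open>The i.i.d. sequence xi_1, xi_2, ... is modelled as a stream w of booleans,
  xi_k = 1 iff w !! (k - 1), under the product measure of Bernoulli(p).\<close>

definition xi_seq :: "real \<Rightarrow> bool stream measure" where
  "xi_seq p = stream_space (measure_pmf (bernoulli_pmf p))"

definition ladder_X :: "nat \<Rightarrow> int \<Rightarrow> bool stream \<Rightarrow> nat \<Rightarrow> int" where
  "ladder_X r s w k =
     (if \<not> w !! (k - 1) then -1
      else if k \<ge> r \<and> (\<forall>j<r. w !! (k - 1 - j)) then s
      else 1)"

definition ladder_S :: "nat \<Rightarrow> int \<Rightarrow> bool stream \<Rightarrow> nat \<Rightarrow> int" where
  "ladder_S r s w n = (\<Sum>k=1..n. ladder_X r s w k)"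

end

theory Submission
  imports Defs
begin

definition st :: "bool \<Rightarrow> bool \<Rightarrow> int" where
  "st b c = (if c then (if b then 2 else 1) else -1)"

primrec walk :: "int \<Rightarrow> bool \<Rightarrow> bool stream \<Rightarrow> nat \<Rightarrow> int" where
  "walk s b w 0 = s"
| "walk s b w (Suc n) = walk (s + st b (shd w)) (shd w) (stl w) n"

primrec H :: "real \<Rightarrow> (int \<Rightarrow> bool) \<Rightarrow> nat \<Rightarrow> int \<Rightarrow> bool \<Rightarrow> real" where
  "H p A 0 s b = (if A s then 1 else 0)"
| "H p A (Suc N) s b = (if A s then 1 else p * H p A N (s + st b True) True + (1-p) * H p A N (s-1) False)"

lemma walk_Suc2: "walk s b w (Suc n) = walk s b w n + st (if n=0 then b else w!!(n-1)) (w!!n)"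
proof (induction n arbitrary: s b w)
  case 0 then show ?case by simp
next
  case (Suc n)
  have "walk s b w (Suc (Suc n)) = walk (s + st b (shd w)) (shd w) (stl w) (Suc n)" by simp
  also have "\<dots> = walk (s + st b (shd w)) (shd w) (stl w) n + st (if n=0 then shd w else (stl w)!!(n-1)) ((stl w)!!n)"
    by (rule Suc.IH)
  also have "(if n=0 then shd w else (stl w)!!(n-1)) = w!!n" by (cases n) auto
  finally show ?case by simp
qed

lemma ladder_walk: "ladder_S 2 2 w n = walk 0 False w n"
proof (induction n)
  case 0 then show ?case by (simp add: ladder_S_def)
next
  case (Suc n)
  have "ladder_S 2 2 w (Suc n) = ladder_S 2 2 w n + ladder_X 2 2 w (Suc n)"
    by (simp add: ladder_S_def)
  moreover have "ladder_X 2 2 w (Suc n) = st (if n=0 then False else w!!(n-1)) (w!!n)"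
    by (auto simp: ladder_X_def st_def numeral_2_eq_2 less_Suc_eq)
  moreover have "walk 0 False w (Suc n) = walk 0 False w n + st (if n=0 then False else w!!(n-1)) (w!!n)"
    by (rule walk_Suc2)
  ultimately show ?case using Suc by simp
qed

lemma walk_meas[measurable]: "(\<lambda>w. walk s b w n) \<in> measurable (stream_space (measure_pmf P)) (count_space UNIV)"
proof (induction n arbitrary: s b)
  case 0 then show ?case by simp
next
  case (Suc n)
  have e: "(\<lambda>w. walk s b w (Suc n)) = (\<lambda>w. if shd w then walk (s + st b True) True (stl w) n else walk (s + st b False) False (stl w) n)"
    by (auto simp: fun_eq_iff)
  have [measurable]: "Measurable.pred (stream_space (measure_pmf P)) shd"
    by (rule measurable_compose[OF measurable_shd]) simp
  show ?case unfolding e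
    by (intro measurable_If measurable_compose[OF measurable_stl Suc.IH]) auto
qed

lemma H_nonneg: "0 \<le> p \<Longrightarrow> p \<le> 1 \<Longrightarrow> 0 \<le> H p A N s b"
  by (induction N arbitrary: s b) auto

lemma ex_le_Suc_split: "(\<exists>n\<le>Suc N. P n) \<longleftrightarrow> P 0 \<or> (\<exists>n\<le>N. P (Suc n))"
  apply auto
  subgoal for n by (cases n) auto
  done

lemma emeasure_E:
  assumes p: "0 \<le> p" "p \<le> 1"
  shows "emeasure (stream_space (measure_pmf (bernoulli_pmf p)))
     {w \<in> space (stream_space (measure_pmf (bernoulli_pmf p))). \<exists>n\<le>N. A (walk s b w n)} = ennreal (H p A N s b)"
proof -
  interpret S: prob_space "stream_space (measure_pmf (bernoulli_pmf p))" by (rule prob_space.prob_space_stream_space[OF prob_space_measure_pmf])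
  show ?thesis
proof (induction N arbitrary: s b)
  case 0
  show ?case by (cases "A s") (simp_all add: S.emeasure_space_1)
next
  case (Suc N)
  have P1: "(\<integral>\<^sup>+t. ennreal 1 \<partial>measure_pmf (bernoulli_pmf p)) = 1"
    by (simp add: measure_pmf.emeasure_space_1)
  let ?S = "stream_space (measure_pmf (bernoulli_pmf p))"
  have sp: "space ?S = UNIV" by (simp add: space_stream_space streams_UNIV)
  have "emeasure ?S {w \<in> space ?S. \<exists>n\<le>Suc N. A (walk s b w n)}
    = (\<integral>\<^sup>+t. emeasure ?S {x\<in>space ?S. t ## x \<in> {w \<in> space ?S. \<exists>n\<le>Suc N. A (walk s b w n)}} \<partial>measure_pmf (bernoulli_pmf p))"
    by (rule prob_space.emeasure_stream_space[OF prob_space_measure_pmf]) measurable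
  also have "\<dots> = (\<integral>\<^sup>+t. ennreal (if A s then 1 else H p A N (s + st b t) t) \<partial>measure_pmf (bernoulli_pmf p))"
  proof (rule nn_integral_cong)
    fix t
    have "{x\<in>space ?S. t ## x \<in> {w \<in> space ?S. \<exists>n\<le>Suc N. A (walk s b w n)}}
        = (if A s then space ?S else {x\<in>space ?S. \<exists>n\<le>N. A (walk (s + st b t) t x n)})"
      by (auto simp: sp ex_le_Suc_split)
    then show "emeasure ?S {x\<in>space ?S. t ## x \<in> {w \<in> space ?S. \<exists>n\<le>Suc N. A (walk s b w n)}}
       = ennreal (if A s then 1 else H p A N (s + st b t) t)"
      using Suc.IH by (simp add: S.emeasure_space_1)
  qed
  also have "\<dots> = ennreal (H p A (Suc N) s b)"
  proof (cases "A s")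
    case True then show ?thesis by (simp add: P1)
  next
    case False
    have h: "0 \<le> H p A N (s + st b t) t" for t using H_nonneg[OF p] .
    have "(\<integral>\<^sup>+t. ennreal (if A s then 1 else H p A N (s + st b t) t) \<partial>measure_pmf (bernoulli_pmf p))
      = ennreal (H p A N (s + st b True) True) * ennreal p + ennreal (H p A N (s + st b False) False) * ennreal (1 - p)"
      using False p by simp
    also have "\<dots> = ennreal (p * H p A N (s + st b True) True + (1-p) * H p A N (s + st b False) False)"
      using p h by (simp add: ennreal_mult' ennreal_plus mult.commute)
    finally show ?thesis using False by (simp add: st_def)
  qed
  finally show ?case .
qed
qed

primrec Rr :: "real \<Rightarrow> int \<Rightarrow> int \<Rightarrow> nat \<Rightarrow> int \<Rightarrow> bool \<Rightarrow> real" where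
  "Rr p lo hi 0 s b = (if lo < s \<and> s < hi then 1 else 0)"
| "Rr p lo hi (Suc N) s b = (if lo < s \<and> s < hi then p * Rr p lo hi N (s + st b True) True + (1-p) * Rr p lo hi N (s-1) False else 0)"

lemma R_zero: "\<not> (lo < s \<and> s < hi) \<Longrightarrow> Rr p lo hi N s b = 0"
  by (cases N) auto

lemma R_step:
  assumes p: "0 \<le> p" "p \<le> 1" and B: "0 \<le> B" and bd: "\<And>s b. Rr p lo hi N s b \<le> B"
  shows "Rr p lo hi (N+j) s b \<le> B \<and> (s - int j \<le> lo \<longrightarrow> Rr p lo hi (N+j) s b \<le> B*(1-(1-p)^j))"
proof (induction j arbitrary: s b)
  case 0
  show ?case using bd[of s b] R_zero[of lo s hi p N b] by auto
next
  case (Suc j)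
  show ?case
  proof (cases "lo < s \<and> s < hi")
    case False
    have "(1-p)^Suc j \<le> 1" using p by (intro power_le_one) auto
    then have w: "0 \<le> B*(1-(1-p)^Suc j)" using B by (intro mult_nonneg_nonneg) auto
    have z: "Rr p lo hi (N + Suc j) s b = 0" by (rule R_zero[OF False])
    show ?thesis using z B w by simp
  next
    case True
    let ?u = "Rr p lo hi (N+j) (s + st b True) True"
    let ?d = "Rr p lo hi (N+j) (s-1) False"
    have e: "Rr p lo hi (N + Suc j) s b = p * ?u + (1-p) * ?d" using True by simp
    have u: "?u \<le> B" using Suc.IH by blast
    have d: "?d \<le> B" using Suc.IH by blast
    have 1: "p * ?u \<le> p * B" using u p by (simp add: mult_left_mono)
    have 2: "(1-p) * ?d \<le> (1-p) * B" using d p by (simp add: mult_left_mono)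
    have A: "Rr p lo hi (N + Suc j) s b \<le> B" using e 1 2 by (simp add: algebra_simps)
    moreover have "s - int (Suc j) \<le> lo \<longrightarrow> Rr p lo hi (N + Suc j) s b \<le> B*(1-(1-p)^Suc j)"
    proof
      assume "s - int (Suc j) \<le> lo"
      then have "(s-1) - int j \<le> lo" by simp
      then have "?d \<le> B*(1-(1-p)^j)" using Suc.IH by blast
      then have 3: "(1-p) * ?d \<le> (1-p) * (B*(1-(1-p)^j))" using p by (simp add: mult_left_mono)
      have "p * B + (1-p) * (B*(1-(1-p)^j)) = B*(1-(1-p)^Suc j)" by (simp add: algebra_simps)
      then show "Rr p lo hi (N + Suc j) s b \<le> B*(1-(1-p)^Suc j)" using e 1 3 by linarith
    qed
    ultimately show ?thesis by blast
  qed
qed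

lemma R_block:
  assumes p: "0 \<le> p" "p \<le> 1" and B: "0 \<le> B" and bd: "\<And>s b. Rr p lo hi N s b \<le> B" and lh: "lo < hi"
  shows "Rr p lo hi (N + nat (hi - lo)) s b \<le> B*(1-(1-p)^nat (hi - lo))"
proof (cases "lo < s \<and> s < hi")
  case True
  then have "s - int (nat (hi - lo)) \<le> lo" using lh by simp
  then show ?thesis using R_step[OF p B bd, of "nat (hi - lo)" s b] by blast
next
  case False
  then show ?thesis using R_zero[OF False] B p by (simp add: power_le_one)
qed

lemma R_pow:
  assumes p: "0 \<le> p" "p \<le> 1" and lh: "lo < hi"
  shows "Rr p lo hi (k * nat (hi - lo)) s b \<le> (1-(1-p)^nat (hi - lo))^k"
proof (induction k arbitrary: s b)
  case 0 then show ?case by simp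
next
  case (Suc k)
  have c: "0 \<le> 1-(1-p)^nat (hi - lo)" using p by (simp add: power_le_one)
  have "Rr p lo hi (k * nat (hi - lo) + nat (hi - lo)) s b \<le> (1-(1-p)^nat (hi - lo))^k * (1-(1-p)^nat (hi - lo))"
    by (rule R_block[OF p _ Suc.IH lh]) (use c in simp)
  then show ?case by (simp add: add.commute mult.commute)
qed

lemma R_nonneg: "0 \<le> p \<Longrightarrow> p \<le> 1 \<Longrightarrow> 0 \<le> Rr p lo hi N s b"
  by (induction N arbitrary: s b) auto

lemma main_bound:
  assumes p: "0 \<le> p" "p \<le> 1" and D: "D > 0"
    and mart: "\<And>s b. p * \<phi> (s + st b True) True + (1-p) * \<phi> (s-1) False = \<phi> s b"
    and dom: "\<And>s b. Dom s \<Longrightarrow> lo < s \<Longrightarrow> s < hi \<Longrightarrow> \<not> A s \<Longrightarrow> Dom (s + st b True) \<and> Dom (s - 1)"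
    and nn: "\<And>s b. Dom s \<Longrightarrow> 0 \<le> \<phi> s b"
    and out: "\<And>s b. Dom s \<Longrightarrow> \<not> A s \<Longrightarrow> \<not> (lo < s \<and> s < hi) \<Longrightarrow> D \<le> \<phi> s b"
    and dis: "\<And>s. A s \<Longrightarrow> \<not> (lo < s \<and> s < hi)"
  shows "Dom s \<Longrightarrow> 1 - \<phi> s b / D - Rr p lo hi N s b \<le> H p A N s b"
proof (induction N arbitrary: s b)
  case 0
  have "0 \<le> \<phi> s b / D" using nn[OF 0] D by simp
  moreover have "\<not> A s \<Longrightarrow> \<not> (lo < s \<and> s < hi) \<Longrightarrow> 1 \<le> \<phi> s b / D" using out[OF 0] D by simp
  ultimately show ?case using dis[of s] by auto
next
  case (Suc N)
  have f0: "0 \<le> \<phi> s b / D" using nn[OF Suc.prems] D by simp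
  show ?case
  proof (cases "A s")
    case True
    have "Rr p lo hi (Suc N) s b = 0" by (rule R_zero[OF dis[OF True]])
    then show ?thesis using f0 True by (simp del: Rr.simps)
  next
    case nA: False
    show ?thesis
    proof (cases "lo < s \<and> s < hi")
      case False
      have "1 \<le> \<phi> s b / D" using out[OF Suc.prems nA False] D by simp
      moreover have "Rr p lo hi (Suc N) s b = 0" by (rule R_zero[OF False])
      ultimately show ?thesis using H_nonneg[OF p, of A "Suc N" s b] by (simp del: Rr.simps H.simps)
    next
      case True
      let ?su = "s + st b True" and ?sd = "s - 1"
      have du: "Dom ?su" and dd: "Dom ?sd" using dom[OF Suc.prems _ _ nA, of b] True by auto
      have iu: "1 - \<phi> ?su True / D - Rr p lo hi N ?su True \<le> H p A N ?su True" by (rule Suc.IH[OF du])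
      have id: "1 - \<phi> ?sd False / D - Rr p lo hi N ?sd False \<le> H p A N ?sd False" by (rule Suc.IH[OF dd])
      have 1: "p * (1 - \<phi> ?su True / D - Rr p lo hi N ?su True) \<le> p * H p A N ?su True"
        using iu p by (simp add: mult_left_mono)
      have 2: "(1-p) * (1 - \<phi> ?sd False / D - Rr p lo hi N ?sd False) \<le> (1-p) * H p A N ?sd False"
        using id p by (simp add: mult_left_mono)
      have "p * (1 - \<phi> ?su True / D - Rr p lo hi N ?su True) + (1-p) * (1 - \<phi> ?sd False / D - Rr p lo hi N ?sd False)
          = 1 - (p * \<phi> ?su True + (1-p) * \<phi> ?sd False) / D - (p * Rr p lo hi N ?su True + (1-p) * Rr p lo hi N ?sd False)"
        using D by (simp add: field_simps)
      also have "\<dots> = 1 - \<phi> s b / D - Rr p lo hi (Suc N) s b" using True mart[of s b] by simp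
      finally show ?thesis using 1 2 nA by simp
    qed
  qed
qed

lemma conclude:
  fixes a a' e :: real and q mu :: real
  assumes a: "0 \<le> a" "0 \<le> a'" and e: "0 \<le> e" and q: "0 < q" "q < 1"
    and h: "\<And>(M::int) (k::nat). M > 0 \<Longrightarrow> 1 - a / (real_of_int M + a') - (1 - q^nat (M + e'))^k \<le> mu"
  shows "1 \<le> mu"
proof (rule ccontr)
  assume "\<not> 1 \<le> mu"
  define d where "d = 1 - mu"
  have d: "d > 0" using \<open>\<not> 1 \<le> mu\<close> d_def by simp
  define M where "M = ceiling (2*a/d) + 1"
  have "0 \<le> 2*a/d" using a d by simp
  then have M: "M > 0" unfolding M_def by simp
  have "2*a/d \<le> real_of_int (ceiling (2*a/d))" by (rule le_of_int_ceiling)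
  then have "2*a/d < real_of_int M" unfolding M_def of_int_add of_int_1 by linarith
  then have "2*a < real_of_int M * d" using d by (simp add: pos_divide_less_eq)
  moreover have "0 \<le> d * a'" using a d by simp
  ultimately have "a < d/2 * (real_of_int M + a')" by (simp add: algebra_simps)
  then have aM: "a / (real_of_int M + a') < d/2" using M a by (simp add: pos_divide_less_eq)
  define c where "c = 1 - q^nat (M + e')"
  have c: "0 \<le> c" "c < 1" using q by (auto simp: c_def power_le_one)
  have "(\<lambda>k. c^k) \<longlonglongrightarrow> 0" using c by (intro LIMSEQ_power_zero) simp
  then have "eventually (\<lambda>k. c^k < d/2) sequentially" by (rule order_tendstoD(2)) (use d in simp)
  then obtain k where k: "c^k < d/2" by (auto simp: eventually_sequentially)
  have "1 - a / (real_of_int M + a') - c^k \<le> mu" using h[OF M, of k] by (simp add: c_def)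
  then show False using aM k d_def by simp
qed

theorem theorem4p3:
  fixes x :: int
  assumes "x > 0"
  defines "p \<equiv> sqrt 2 - 1"
  shows "measure (xi_seq p) {w \<in> space (xi_seq p). \<exists>n\<ge>1. ladder_S 2 2 w n \<ge> x} = 1
       \<and> measure (xi_seq p) {w \<in> space (xi_seq p). \<exists>n\<ge>1. ladder_S 2 2 w n \<le> - x} = 1"
proof -
  have s1: "1 < sqrt (2::real)" by simp
  have s2: "sqrt (2::real) < 2"
  proof -
    have "sqrt (2::real) < sqrt 4" by (simp only: real_sqrt_less_iff)
    then show ?thesis by simp
  qed
  have p01: "0 < p" "p < 1" using s1 s2 unfolding p_def by auto
  then have p: "0 \<le> p" "p \<le> 1" by auto
  have ss: "sqrt (2::real) * sqrt 2 = 2" by simp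
  have pq: "p*p + 2*p - 1 = 0" unfolding p_def using ss by (simp add: algebra_simps)
  define m where "m s b = real_of_int s + (if b then p else 0)" for s b
  have mart: "p * m (s + st b True) True + (1-p) * m (s-1) False = m s b" for s b
    using pq by (cases b) (simp_all add: m_def st_def algebra_simps)
  have mlo: "real_of_int s \<le> m s b" for s b using p by (simp add: m_def)
  have mhi: "m s b \<le> real_of_int s + 1" for s b using p by (simp add: m_def)
  have m0: "m 0 False = 0" by (simp add: m_def)
  have stb: "1 \<le> st b True" "st b True \<le> 2" for b by (simp_all add: st_def)
  let ?S = "xi_seq p"
  interpret S: prob_space ?S unfolding xi_seq_def
    by (rule prob_space.prob_space_stream_space[OF prob_space_measure_pmf])
  have Hm: "measure ?S {w\<in>space ?S. \<exists>n\<le>N. A (walk s b w n)} = H p A N s b" for A N s b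
    using emeasure_E[OF p, of N A s b] H_nonneg[OF p, of A N s b]
    by (simp add: measure_def xi_seq_def)
  have xp: "0 < real_of_int x" using assms(1) by simp
  define T1 where "T1 = {w \<in> space ?S. \<exists>n\<ge>1. ladder_S 2 2 w n \<le> - x}"
  have T1eq: "T1 = {w\<in>space ?S. \<exists>n. 1 \<le> n \<and> walk 0 False w n \<le> -x}"
    unfolding T1_def by (simp add: ladder_walk)
  have T1m: "T1 \<in> sets ?S" unfolding T1eq xi_seq_def by measurable
  have HT1: "H p (\<lambda>s. s \<le> -x) N 0 False \<le> measure ?S T1" for N
  proof -
    have "{w\<in>space ?S. \<exists>n\<le>N. walk 0 False w n \<le> -x} \<subseteq> T1"
    proof
      fix w assume "w \<in> {w\<in>space ?S. \<exists>n\<le>N. walk 0 False w n \<le> -x}"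
      then obtain n where n: "w \<in> space ?S" "walk 0 False w n \<le> -x" by auto
      have "n \<noteq> 0" using n assms(1) by (cases n) auto
      then show "w \<in> T1" unfolding T1eq using n by (auto intro!: exI[of _ n])
    qed
    then have "measure ?S {w\<in>space ?S. \<exists>n\<le>N. walk 0 False w n \<le> -x} \<le> measure ?S T1"
      by (rule S.finite_measure_mono[OF _ T1m])
    then show ?thesis using Hm[of N "\<lambda>s. s \<le> -x" 0 False] by simp
  qed
  have B1: "1 - real_of_int x / (real_of_int M + real_of_int x) - (1 - (1-p)^nat (M + x))^k \<le> measure ?S T1"
    if M: "M > 0" for M :: int and k
  proof -
    let ?N = "k * nat (M - -x)"
    have mb: "1 - (m 0 False + x) / real_of_int (M + x) - Rr p (-x) M ?N 0 False \<le> H p (\<lambda>s. s \<le> -x) ?N 0 False"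
    proof (rule main_bound[OF p, where Dom = "\<lambda>s. -x \<le> s"])
      show "0 < real_of_int (M + x)" using M assms(1) by simp
      show "p * (m (s + st b True) True + x) + (1-p) * (m (s-1) False + x) = m s b + x" for s b
        using mart[of s b] by (simp add: algebra_simps)
      show "-x \<le> s + st b True \<and> -x \<le> s - 1" if "-x \<le> s" "-x < s" for s b using that stb[of b] by auto
      show "0 \<le> m s b + x" if "-x \<le> s" for s b using that mlo[of s b] by simp
      show "real_of_int (M + x) \<le> m s b + x" if "-x \<le> s" "\<not> s \<le> -x" "\<not> (-x < s \<and> s < M)" for s b
        using that mlo[of s b] by simp
      show "\<not> (-x < s \<and> s < M)" if "s \<le> -x" for s using that by simp
      show "-x \<le> (0::int)" using assms(1) by simp
    qed
    have "Rr p (-x) M ?N 0 False \<le> (1 - (1-p)^nat (M - -x))^k"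
      by (rule R_pow[OF p]) (use M assms(1) in simp)
    then show ?thesis using mb HT1[of ?N] m0 by simp
  qed
  have T1a: "1 \<le> measure ?S T1"
    by (rule conclude[where a = "real_of_int x" and a' = "real_of_int x" and e = 0 and q = "1-p" and e' = x])
       (use xp p01 B1 in auto)
  define T2 where "T2 = {w \<in> space ?S. \<exists>n\<ge>1. ladder_S 2 2 w n \<ge> x}"
  have T2eq: "T2 = {w\<in>space ?S. \<exists>n. 1 \<le> n \<and> x \<le> walk 0 False w n}"
    unfolding T2_def by (simp add: ladder_walk)
  have T2m: "T2 \<in> sets ?S" unfolding T2eq xi_seq_def by measurable
  have HT2: "H p (\<lambda>s. x \<le> s) N 0 False \<le> measure ?S T2" for N
  proof -
    have "{w\<in>space ?S. \<exists>n\<le>N. x \<le> walk 0 False w n} \<subseteq> T2"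
    proof
      fix w assume "w \<in> {w\<in>space ?S. \<exists>n\<le>N. x \<le> walk 0 False w n}"
      then obtain n where n: "w \<in> space ?S" "x \<le> walk 0 False w n" by auto
      have "n \<noteq> 0" using n assms(1) by (cases n) auto
      then show "w \<in> T2" unfolding T2eq using n by (auto intro!: exI[of _ n])
    qed
    then have "measure ?S {w\<in>space ?S. \<exists>n\<le>N. x \<le> walk 0 False w n} \<le> measure ?S T2"
      by (rule S.finite_measure_mono[OF _ T2m])
    then show ?thesis using Hm[of N "\<lambda>s. x \<le> s" 0 False] by simp
  qed
  have B2: "1 - real_of_int (x + 2) / (real_of_int K + real_of_int (x + 1)) - (1 - (1-p)^nat (K + x))^k \<le> measure ?S T2"
    if K: "K > 0" for K :: int and k
  proof -
    let ?N = "k * nat (x - -K)"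
    have mb: "1 - (real_of_int (x + 2) - m 0 False) / real_of_int (K + x + 1) - Rr p (-K) x ?N 0 False \<le> H p (\<lambda>s. x \<le> s) ?N 0 False"
    proof (rule main_bound[OF p, where Dom = "\<lambda>s. s \<le> x + 1"])
      show "0 < real_of_int (K + x + 1)" using K assms(1) by simp
      show "p * (real_of_int (x + 2) - m (s + st b True) True) + (1-p) * (real_of_int (x + 2) - m (s-1) False) = real_of_int (x + 2) - m s b" for s b
        using mart[of s b] by (simp add: algebra_simps)
      show "s + st b True \<le> x + 1 \<and> s - 1 \<le> x + 1" if "s \<le> x + 1" "s < x" for s b using that stb[of b] by auto
      show "0 \<le> real_of_int (x + 2) - m s b" if "s \<le> x + 1" for s b using that mhi[of s b] by simp
      show "real_of_int (K + x + 1) \<le> real_of_int (x + 2) - m s b" if "s \<le> x + 1" "\<not> x \<le> s" "\<not> (-K < s \<and> s < x)" for s b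
        using that mhi[of s b] by simp
      show "\<not> (-K < s \<and> s < x)" if "x \<le> s" for s using that by simp
      show "(0::int) \<le> x + 1" using assms(1) by simp
    qed
    have "Rr p (-K) x ?N 0 False \<le> (1 - (1-p)^nat (x - -K))^k"
      by (rule R_pow[OF p]) (use K assms(1) in simp)
    then show ?thesis using mb HT2[of ?N] m0 by (simp add: add.commute add.left_commute)
  qed
  have T2a: "1 \<le> measure ?S T2"
    by (rule conclude[where a = "real_of_int (x+2)" and a' = "real_of_int (x+1)" and e = 0 and q = "1-p" and e' = x])
       (use xp p01 B2 in auto)
  show ?thesis using T1a T2a S.prob_le_1[of T1] S.prob_le_1[of T2] unfolding T1_def T2_def by linarith
qed

end
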